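(* Let $P$ be a probability distribution on a finite alphabet $\mathcal A=\{a_1,a_2,\dots,a_{|\mathcal A|}\}$ (with $a_1\neq a_2$), and suppose that for some integer $s\ge1$ and some constant $\delta_0\in(0,1)$, $$\frac{3}{s\delta_0}<\min\{P(a_1),P(a_2)\}.$$ Let $\hat P$ be an empirical type over $\mathcal A^s$ such that $\min\Big\{\frac{\hat P(a_1)}{P(a_1)},\frac{P(a_2)}{\hat P(a_2)}\Big\}\ge\delta_0$ and $\hat P(a_2)\ge 1/s$. Define $\bar P$ by $\bar P(a_1)=\hat P(a_1)-\frac3s$, $\bar P(a_2)=\hat P(a_2)+\frac3s$, and $\bar P(a_i)=\hat P(a_i)$ for all $a_i\in\mathcal A\setminus\{a_1,a_2\}$. Then $$P^s(T(\bar P))\ge\delta\,P^s(T(\hat P))$$ for some strictly positive constant $\delta=\delta(\delta_0)$ depending only on $\delta_0$.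
   Context: An empirical type over $\mathcal A^s$ is a distribution $\hat P$ on $\mathcal A$ such that $\hat P(a)$ is an integer multiple of $1/s$ for every $a\in\mathcal A$. $P^s$ denotes the product distribution induced by $P$ on $\mathcal A^s$, and $T(\hat P)$ (resp. $T(\bar P)$) denotes the set of sequences in $\mathcal A^s$ whose empirical distribution equals $\hat P$ (resp. $\bar P$). *)

theory Defs
  imports Main Complex_Main
begin

definition prob_dist :: "'a set \<Rightarrow> ('a \<Rightarrow> real) \<Rightarrow> bool" where
  "prob_dist A P \<longleftrightarrow> (\<forall>a\<in>A. 0 \<le> P a) \<and> (\<Sum>a\<in>A. P a) = 1"

definition empirical_type :: "'a set \<Rightarrow> nat \<Rightarrow> ('a \<Rightarrow> real) \<Rightarrow> bool" where
  "empirical_type A s Q \<longleftrightarrow> prob_dist A Q \<and> (\<forall>a\<in>A. \<exists>k::nat. Q a = real k / real s)"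

definition typ_class :: "'a set \<Rightarrow> nat \<Rightarrow> ('a \<Rightarrow> real) \<Rightarrow> 'a list set" where
  "typ_class A s Q = {xs. set xs \<subseteq> A \<and> length xs = s \<and>
      (\<forall>a\<in>A. real (count_list xs a) / real s = Q a)}"

definition type_prob :: "'a set \<Rightarrow> ('a \<Rightarrow> real) \<Rightarrow> nat \<Rightarrow> ('a \<Rightarrow> real) \<Rightarrow> real" where
  "type_prob A P s Q = (\<Sum>xs\<in>typ_class A s Q. prod_list (map P xs))"

end

theory Submission imports Defs begin

lemma count_list_update:
  "i < length xs \<Longrightarrow> count_list (xs[i:=b]) a =
     count_list xs a - (if xs!i = a then 1 else 0) + (if b = a then 1 else 0)"
proof (induction xs arbitrary: i)
  case Nil then show ?case by simp
next
  case (Cons x xs)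
  have p: "j < length xs \<Longrightarrow> count_list xs (xs!j) > 0" for j
    using count_list_0_iff[of xs "xs!j"] nth_mem[of j xs] by auto
  show ?case
  proof (cases i)
    case 0 then show ?thesis by auto
  next
    case (Suc j) then show ?thesis using Cons p[of j] by auto
  qed
qed

definition CC :: "'a set \<Rightarrow> nat \<Rightarrow> ('a \<Rightarrow> nat) \<Rightarrow> 'a list set" where
  "CC A s c = {xs. set xs \<subseteq> A \<and> length xs = s \<and> (\<forall>a\<in>A. count_list xs a = c a)}"

lemma finite_CC: "finite A \<Longrightarrow> finite (CC A s c)"
  unfolding CC_def by (rule finite_subset[OF _ finite_lists_length_eq[of A s]]) auto

lemma card_pos_idx: "card {i. i < length xs \<and> xs!i = a} = count_list xs a"
proof -
  have "count_list xs a = length (filter ((=) a) xs)" by (rule count_list_eq_length_filter)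
  also have "\<dots> = card {i. i < length xs \<and> a = xs!i}" by (rule length_filter_conv_card)
  finally show ?thesis by (simp add: eq_commute)
qed

lemma step:
  assumes fin: "finite A" and A1: "a1 \<in> A" and A2: "a2 \<in> A" and ne: "a1 \<noteq> a2"
    and pos: "c a1 \<ge> 1"
  shows "card (CC A s c) * c a1 = card (CC A s (c(a1 := c a1 - 1, a2 := c a2 + 1))) * (c a2 + 1)"
proof -
  define c' where "c' = c(a1 := c a1 - 1, a2 := c a2 + 1)"
  define S1 where "S1 = Sigma (CC A s c) (\<lambda>xs. {i. i < length xs \<and> xs!i = a1})"
  define S2 where "S2 = Sigma (CC A s c') (\<lambda>xs. {i. i < length xs \<and> xs!i = a2})"
  have c1: "card S1 = card (CC A s c) * c a1"
  proof -
    have "card S1 = (\<Sum>xs\<in>CC A s c. card {i. i < length xs \<and> xs!i = a1})"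
      unfolding S1_def by (rule card_SigmaI) (auto simp: finite_CC fin)
    also have "\<dots> = (\<Sum>xs\<in>CC A s c. c a1)"
      by (rule sum.cong) (auto simp: card_pos_idx CC_def A1)
    finally show ?thesis by simp
  qed
  have c2: "card S2 = card (CC A s c') * (c a2 + 1)"
  proof -
    have "card S2 = (\<Sum>xs\<in>CC A s c'. card {i. i < length xs \<and> xs!i = a2})"
      unfolding S2_def by (rule card_SigmaI) (auto simp: finite_CC fin)
    also have "\<dots> = (\<Sum>xs\<in>CC A s c'. c a2 + 1)"
      by (rule sum.cong) (auto simp: card_pos_idx CC_def A2 c'_def ne)
    finally show ?thesis by simp
  qed
  have "bij_betw (\<lambda>(xs,i). (xs[i:=a2], i)) S1 S2"
  proof (rule bij_betw_byWitness[where f'="\<lambda>(xs,i). (xs[i:=a1], i)"])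
    show "\<forall>x\<in>S1. (case case x of (xs, i) \<Rightarrow> (xs[i := a2], i) of (xs, i) \<Rightarrow> (xs[i := a1], i)) = x"
      by (auto simp: S1_def)
    show "\<forall>x\<in>S2. (case case x of (xs, i) \<Rightarrow> (xs[i := a1], i) of (xs, i) \<Rightarrow> (xs[i := a2], i)) = x"
      by (auto simp: S2_def)
    show "(\<lambda>(xs, i). (xs[i := a2], i)) ` S1 \<subseteq> S2"
    proof clarify
      fix xs i assume "(xs, i) \<in> S1"
      then have h: "xs \<in> CC A s c" "i < length xs" "xs!i = a1" by (auto simp: S1_def)
      have "set (xs[i:=a2]) \<subseteq> A" using h A2 set_update_subset_insert[of xs i a2]
        unfolding CC_def by auto
      moreover have "\<forall>a\<in>A. count_list (xs[i:=a2]) a = c' a"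
        using h ne pos by (auto simp: count_list_update CC_def c'_def)
      ultimately show "(xs[i := a2], i) \<in> S2" using h unfolding S2_def CC_def by auto
    qed
    show "(\<lambda>(xs, i). (xs[i := a1], i)) ` S2 \<subseteq> S1"
    proof clarify
      fix xs i assume "(xs, i) \<in> S2"
      then have h: "xs \<in> CC A s c'" "i < length xs" "xs!i = a2" by (auto simp: S2_def)
      have "set (xs[i:=a1]) \<subseteq> A" using h A1 set_update_subset_insert[of xs i a1]
        unfolding CC_def by auto
      moreover have "\<forall>a\<in>A. count_list (xs[i:=a1]) a = c a"
        using h ne pos by (auto simp: count_list_update CC_def c'_def)
      ultimately show "(xs[i := a1], i) \<in> S1" using h unfolding S1_def CC_def by auto
    qed
  qed
  then have "card S1 = card S2" by (rule bij_betw_same_card)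
  then show ?thesis using c1 c2 c'_def by simp
qed

lemma prod_count:
  fixes P :: "'a \<Rightarrow> real"
  shows   "finite A \<Longrightarrow> set xs \<subseteq> A \<Longrightarrow> prod_list (map P xs) = (\<Prod>a\<in>A. P a ^ count_list xs a)"
proof (induction xs)
  case Nil then show ?case by simp
next
  case (Cons x xs)
  then have x: "x \<in> A" by simp
  have "(\<Prod>a\<in>A. P a ^ count_list (x#xs) a) = (\<Prod>a\<in>A. (if a = x then P a else 1) * P a ^ count_list xs a)"
    by (rule prod.cong) auto
  also have "\<dots> = P x * (\<Prod>a\<in>A. P a ^ count_list xs a)"
    using x Cons.prems by (simp add: prod.distrib prod.delta)
  finally show ?case using Cons by simp
qed

lemma typ_class_CC:
  assumes "s \<ge> 1" "\<forall>a\<in>A. Q a = real (c a) / real s"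
  shows "typ_class A s Q = CC A s c"
  using assms unfolding typ_class_def CC_def by (auto simp: divide_right_mono)

lemma type_prob_CC:
  fixes P :: "'a \<Rightarrow> real"
  assumes "finite A" "s \<ge> 1" "\<forall>a\<in>A. Q a = real (c a) / real s"
  shows "type_prob A P s Q = card (CC A s c) * (\<Prod>a\<in>A. P a ^ c a)"
proof -
  have "type_prob A P s Q = (\<Sum>xs\<in>CC A s c. (\<Prod>a\<in>A. P a ^ c a))"
    unfolding type_prob_def typ_class_CC[OF assms(2,3)]
    by (rule sum.cong) (auto simp: CC_def prod_count[OF assms(1)])
  then show ?thesis by simp
qed


lemma key_ineq:
  fixes x y P1 P2 d0 sr :: real
  assumes x4: "x \<ge> 4" and y1: "y \<ge> 1" and d0: "0 < d0" and P1: "P1 > 0" and P2: "P2 > 0"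
    and sr: "sr > 0"
    and xu: "x \<ge> sr * d0 * P1" and yv: "y \<le> sr * P2 / d0"
  shows "P2^3 * (x * (x-1) * (x-2)) \<ge> (3 * d0^6 / 512) * P1^3 * ((y+1)*(y+2)*(y+3))"
proof -
  have K: "x * (x-1) * (x-2) \<ge> 3/8 * x^3"
  proof -
    have "x * (x-1) * (x-2) - 3/8 * x^3 = x * ((5*x-4)*(x-4)) / 8"
      by (simp add: algebra_simps power3_eq_cube)
    moreover have "x * ((5*x-4)*(x-4)) \<ge> 0" using x4 by simp
    ultimately show ?thesis by linarith
  qed
  have D: "(y+1)*(y+2)*(y+3) \<le> 64 * y^3"
  proof -
    have "(y+1)*(y+2)*(y+3) \<le> (4*y)*(4*y)*(4*y)"
      using y1 by (intro mult_mono) auto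
    then show ?thesis by (simp add: power3_eq_cube)
  qed
  have yv3: "y^3 \<le> (sr * P2 / d0)^3" using yv y1 by (intro power_mono) auto
  have xu3: "(sr * d0 * P1)^3 \<le> x^3" using xu sr d0 P1 by (intro power_mono) auto
  have dpos: "3 * d0^6 / 512 * P1^3 \<ge> 0" using d0 P1 by simp
  have "(3 * d0^6 / 512) * P1^3 * ((y+1)*(y+2)*(y+3)) \<le> (3 * d0^6 / 512) * P1^3 * (64 * (sr * P2 / d0)^3)"
    using D yv3 dpos by (intro mult_left_mono) auto
  also have "\<dots> = 3/8 * (sr * d0 * P1)^3 * P2^3"
    using d0 by (simp add: field_simps power3_eq_cube eval_nat_numeral)
  also have "\<dots> \<le> 3/8 * x^3 * P2^3" using xu3 P2 by (intro mult_right_mono) auto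
  also have "\<dots> \<le> P2^3 * (x * (x-1) * (x-2))" using K P2 by (simp add: mult.commute)
  finally show ?thesis .
qed

theorem lemma1:
  fixes \<delta>\<^sub>0 :: real
  assumes "0 < \<delta>\<^sub>0" and "\<delta>\<^sub>0 < 1"
  shows "\<exists>\<delta>>0. \<forall>(A::nat set) (P::nat \<Rightarrow> real) (s::nat) (Phat::nat \<Rightarrow> real) a1 a2.
     finite A \<longrightarrow> a1 \<in> A \<longrightarrow> a2 \<in> A \<longrightarrow> a1 \<noteq> a2 \<longrightarrow> prob_dist A P \<longrightarrow> s \<ge> 1 \<longrightarrow>
     3 / (real s * \<delta>\<^sub>0) < min (P a1) (P a2) \<longrightarrow>
     empirical_type A s Phat \<longrightarrow>
     min (Phat a1 / P a1) (P a2 / Phat a2) \<ge> \<delta>\<^sub>0 \<longrightarrow>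
     Phat a2 \<ge> 1 / real s \<longrightarrow>
     type_prob A P s (Phat(a1 := Phat a1 - 3 / real s, a2 := Phat a2 + 3 / real s))
       \<ge> \<delta> * type_prob A P s Phat"
proof (intro exI[of _ "3 * \<delta>\<^sub>0^6 / 512"] conjI allI impI)
  show "0 < 3 * \<delta>\<^sub>0^6 / 512" using assms by simp
  fix A :: "nat set" and P :: "nat \<Rightarrow> real" and s :: nat and Phat :: "nat \<Rightarrow> real" and a1 a2
  assume fin: "finite A" and A1: "a1 \<in> A" and A2: "a2 \<in> A" and ne: "a1 \<noteq> a2"
    and pd: "prob_dist A P" and s1: "s \<ge> 1"
    and hP: "3 / (real s * \<delta>\<^sub>0) < min (P a1) (P a2)"
    and et: "empirical_type A s Phat"
    and hr: "min (Phat a1 / P a1) (P a2 / Phat a2) \<ge> \<delta>\<^sub>0"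
    and h2: "Phat a2 \<ge> 1 / real s"
  define d0 where "d0 = \<delta>\<^sub>0"
  have d0: "0 < d0" using assms d0_def by simp
  define c where "c a = (SOME k::nat. Phat a = real k / real s)" for a
  have c: "\<forall>a\<in>A. Phat a = real (c a) / real s"
    using et unfolding empirical_type_def c_def by (metis (mono_tags, lifting) someI_ex)
  define k1 where "k1 = c a1"
  define k2 where "k2 = c a2"
  have sr: "real s > 0" using s1 by simp
  have q: "3 / (real s * d0) > 0" using sr d0 by simp
  have h1: "3 / (real s * d0) < P a1" and h2': "3 / (real s * d0) < P a2"
    using hP d0_def by auto
  have P1: "P a1 > 0" and P2: "P a2 > 0" using h1 h2' q by linarith+
  have "3 < real s * d0 * P a1"
    using hP sr d0 d0_def by (auto simp: field_simps)
  have xu: "real k1 \<ge> real s * d0 * P a1"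
  proof -
    have "Phat a1 / P a1 \<ge> d0" using hr d0_def by simp
    then have "Phat a1 \<ge> d0 * P a1" using P1 by (simp add: field_simps)
    then have "real k1 / real s \<ge> d0 * P a1" using c A1 k1_def by simp
    then show ?thesis using sr by (simp add: field_simps)
  qed
  have k14: "k1 \<ge> 4" using xu \<open>3 < real s * d0 * P a1\<close> by linarith
  have k21: "k2 \<ge> 1"
  proof -
    have "real k2 / real s \<ge> 1 / real s" using c A2 k2_def h2 by simp
    then have "real k2 \<ge> 1" using sr by (simp add: divide_le_cancel)
    then show ?thesis by simp
  qed
  have yv: "real k2 \<le> real s * P a2 / d0"
  proof -
    have ph: "Phat a2 > 0" using c A2 k2_def k21 sr by simp
    have "P a2 / Phat a2 \<ge> d0" using hr d0_def by simp
    then have "P a2 \<ge> d0 * Phat a2" using ph by (simp add: field_simps)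
    then have "P a2 \<ge> d0 * (real k2 / real s)" using c A2 k2_def by simp
    then show ?thesis using sr d0 by (simp add: field_simps)
  qed
  define c1 where "c1 = c(a1 := k1 - 1, a2 := k2 + 1)"
  define c2 where "c2 = c(a1 := k1 - 2, a2 := k2 + 2)"
  define c3 where "c3 = c(a1 := k1 - 3, a2 := k2 + 3)"
  have e1: "card (CC A s c) * k1 = card (CC A s c1) * (k2 + 1)"
    using step[OF fin A1 A2 ne, of c s] k14 unfolding c1_def k1_def k2_def by simp
  have e2: "card (CC A s c1) * (k1 - 1) = card (CC A s c2) * (k2 + 2)"
  proof -
    have "c1(a1 := c1 a1 - 1, a2 := c1 a2 + 1) = c2" using ne unfolding c1_def c2_def
      by (auto simp: fun_eq_iff)
    moreover have "c1 a1 = k1 - 1" "c1 a2 = k2 + 1" using ne by (auto simp: c1_def)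
    moreover have "1 \<le> c1 a1" using k14 \<open>c1 a1 = k1 - 1\<close> by simp
    ultimately have st: "card (CC A s c1) * c1 a1 = card (CC A s c2) * (c1 a2 + 1)"
      using step[OF fin A1 A2 ne, of c1 s] by simp
    show ?thesis using st \<open>c1 a1 = k1 - 1\<close> \<open>c1 a2 = k2 + 1\<close> by simp
  qed
  have e3: "card (CC A s c2) * (k1 - 2) = card (CC A s c3) * (k2 + 3)"
  proof -
    have "c2(a1 := c2 a1 - 1, a2 := c2 a2 + 1) = c3" using ne unfolding c2_def c3_def
      by (auto simp: fun_eq_iff)
    moreover have "c2 a1 = k1 - 2" "c2 a2 = k2 + 2" using ne by (auto simp: c2_def)
    moreover have "1 \<le> c2 a1" using k14 \<open>c2 a1 = k1 - 2\<close> by simp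
    ultimately have st: "card (CC A s c2) * c2 a1 = card (CC A s c3) * (c2 a2 + 1)"
      using step[OF fin A1 A2 ne, of c2 s] by simp
    show ?thesis using st \<open>c2 a1 = k1 - 2\<close> \<open>c2 a2 = k2 + 2\<close> by (simp add: eval_nat_numeral)
  qed
  define N0 where "N0 = real (card (CC A s c))"
  define N3 where "N3 = real (card (CC A s c3))"
  define x where "x = real k1"
  define y where "y = real k2"
  have r1: "N0 * x = real (card (CC A s c1)) * (y+1)"
    using arg_cong[OF e1, of real] unfolding N0_def x_def y_def by (simp add: algebra_simps)
  have r2: "real (card (CC A s c1)) * (x - 1) = real (card (CC A s c2)) * (y+2)"
    using arg_cong[OF e2, of real] k14 unfolding x_def y_def by (simp add: of_nat_diff algebra_simps)
  have r3: "real (card (CC A s c2)) * (x - 2) = N3 * (y+3)"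
    using arg_cong[OF e3, of real] k14 unfolding N3_def x_def y_def by (simp add: of_nat_diff algebra_simps)
  have NN: "N0 * (x*(x-1)*(x-2)) = N3 * ((y+1)*(y+2)*(y+3))"
  proof -
    have "N0 * (x*(x-1)*(x-2)) = (N0 * x) * (x-1) * (x-2)" by (simp add: algebra_simps)
    also have "\<dots> = (real (card (CC A s c1)) * (x-1)) * (y+1) * (x-2)" unfolding r1 by (simp add: algebra_simps)
    also have "\<dots> = (real (card (CC A s c2)) * (x-2)) * (y+1) * (y+2)" unfolding r2 by (simp add: algebra_simps)
    also have "\<dots> = N3 * ((y+1)*(y+2)*(y+3))" unfolding r3 by (simp add: algebra_simps)
    finally show ?thesis .
  qed
  define R where "R = (\<Prod>a\<in>A-{a1,a2}. P a ^ c a)"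
  have split: "(\<Prod>a\<in>A. f a) = f a1 * (f a2 * (\<Prod>a\<in>A-{a1,a2}. f a))" for f :: "nat \<Rightarrow> real"
  proof -
    have "(\<Prod>a\<in>A. f a) = f a1 * (\<Prod>a\<in>A-{a1}. f a)" using fin A1 by (rule prod.remove)
    also have "(\<Prod>a\<in>A-{a1}. f a) = f a2 * (\<Prod>a\<in>A-{a1}-{a2}. f a)"
      using fin A2 ne by (intro prod.remove) auto
    also have "A-{a1}-{a2} = A-{a1,a2}" by auto
    finally show ?thesis .
  qed
  have Pi0: "(\<Prod>a\<in>A. P a ^ c a) = P a1 ^ k1 * (P a2 ^ k2 * R)"
    unfolding split[of "\<lambda>a. P a ^ c a"] R_def k1_def k2_def ..
  have Pi3: "(\<Prod>a\<in>A. P a ^ c3 a) = P a1 ^ (k1-3) * (P a2 ^ (k2+3) * R)"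
  proof -
    have "(\<Prod>a\<in>A-{a1,a2}. P a ^ c3 a) = R" unfolding R_def by (rule prod.cong) (auto simp: c3_def)
    then show ?thesis unfolding split[of "\<lambda>a. P a ^ c3 a"] using ne by (simp add: c3_def)
  qed
  have Pirel: "(\<Prod>a\<in>A. P a ^ c3 a) * P a1 ^ 3 = (\<Prod>a\<in>A. P a ^ c a) * P a2 ^ 3"
  proof -
    have "P a1 ^ (k1-3) * P a1 ^ 3 = P a1 ^ k1" using k14 by (simp add: power_add[symmetric])
    then show ?thesis unfolding Pi0 Pi3 by (simp add: algebra_simps power_add)
  qed
  have Pi0nn: "(\<Prod>a\<in>A. P a ^ c a) \<ge> 0"
    using pd unfolding prob_dist_def by (intro prod_nonneg) auto
  have tp0: "type_prob A P s Phat = N0 * (\<Prod>a\<in>A. P a ^ c a)"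
    unfolding N0_def by (rule type_prob_CC[OF fin s1 c])
  have cb: "\<forall>a\<in>A. (Phat(a1 := Phat a1 - 3 / real s, a2 := Phat a2 + 3 / real s)) a = real (c3 a) / real s"
    using c ne k14 A1 A2 unfolding c3_def k1_def k2_def by (auto simp: of_nat_diff diff_divide_distrib add_divide_distrib)
  have tp3: "type_prob A P s (Phat(a1 := Phat a1 - 3 / real s, a2 := Phat a2 + 3 / real s)) = N3 * (\<Prod>a\<in>A. P a ^ c3 a)"
    unfolding N3_def by (rule type_prob_CC[OF fin s1 cb])
  define Q0 where "Q0 = (\<Prod>a\<in>A. P a ^ c a)"
  define Q3 where "Q3 = (\<Prod>a\<in>A. P a ^ c3 a)"
  have key: "P a2^3 * (x * (x-1) * (x-2)) \<ge> (3 * d0^6 / 512) * P a1^3 * ((y+1)*(y+2)*(y+3))"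
    using key_ineq[OF _ _ d0 P1 P2 sr] k14 k21 xu yv unfolding x_def y_def by simp
  have Dpos: "P a1^3 * ((y+1)*(y+2)*(y+3)) > 0" using P1 k21 y_def by simp
  have N0nn: "N0 * Q0 \<ge> 0" using Pi0nn Q0_def N0_def by simp
  have "(3 * d0^6 / 512) * (N0 * Q0) * (P a1^3 * ((y+1)*(y+2)*(y+3)))
        = (N0 * Q0) * ((3 * d0^6 / 512) * P a1^3 * ((y+1)*(y+2)*(y+3)))" by (simp add: algebra_simps)
  also have "\<dots> \<le> (N0 * Q0) * (P a2^3 * (x * (x-1) * (x-2)))"
    using key N0nn by (rule mult_left_mono)
  also have "\<dots> = (Q0 * P a2^3) * (N0 * (x * (x-1) * (x-2)))" by (simp add: algebra_simps)
  also have "\<dots> = (Q3 * P a1^3) * (N3 * ((y+1)*(y+2)*(y+3)))" unfolding NN Q0_def Q3_def Pirel ..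
  also have "\<dots> = (N3 * Q3) * (P a1^3 * ((y+1)*(y+2)*(y+3)))" by (simp add: algebra_simps)
  finally have "(3 * d0^6 / 512) * (N0 * Q0) \<le> N3 * Q3"
    by (rule mult_right_le_imp_le[OF _ Dpos])
  then show "3 * \<delta>\<^sub>0^6 / 512 * type_prob A P s Phat
      \<le> type_prob A P s (Phat(a1 := Phat a1 - 3 / real s, a2 := Phat a2 + 3 / real s))"
    unfolding tp0 tp3 Q0_def Q3_def d0_def .
qed

end
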